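(* Let $\mathcal A_+,\mathcal A_-\subseteq\mathbb Z^n$ be disjoint finite sets, $\mathcal A=\mathcal A_+\cup\mathcal A_-$, and assume $\mathcal A_-\neq\varnothing$ and $\operatorname{vertices}(\operatorname{conv}(\mathcal A))\subseteq\mathcal A_+$. Let $\Gamma$ be the smallest face of $\operatorname{conv}(\mathcal A)$ containing $\mathcal A_-$, and let $J$ be the set of faces $\Gamma'$ of $\Gamma$ with $\Gamma'\cap\mathcal A_-\neq\varnothing$. Let $f\in\mathcal S(\mathcal A_+,\mathcal A_-)$ have nonsigned coefficients $c\in\mathbb R^{\mathcal A}_{>0}$, and let $h:\mathcal A\to\mathbb Z$ be a height function lifting $\mathcal A_-$. Define $$S:=\bigcup_{\Gamma'\in J}\{t\in\mathbb R_{>0}:\ F^{\Gamma'}(\pi_{\Gamma'}(c\star t^h),x)=0\text{ for some }x\in\mathbb R^n_{>0}\}.$$ Then (i) $S$ has a minimum $t_*$; and (ii) $f$ is copositive if and only if $t_*\ge 1$.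
   Context: For disjoint finite $\mathcal A_+,\mathcal A_-\subseteq\mathbb R^n$, a signomial with signed support $(\mathcal A_+,\mathcal A_-)$ is a function $f:\mathbb R^n_{>0}\to\mathbb R$, $f(x)=\sum_{a\in\mathcal A_+}c_ax^a-\sum_{b\in\mathcal A_-}c_bx^b$ with all $c_a,c_b>0$ (the nonsigned coefficients), where $x^a=\prod_i x_i^{a_i}$. $\mathcal A=\mathcal A_+\cup\mathcal A_-$ is the support; $\mathcal S(\mathcal A_+,\mathcal A_-)$ is the set of such signomials, identified with $\mathbb R^{\mathcal A}_{>0}$ via the nonsigned coefficients; $f_c$ denotes the signomial with nonsigned coefficients $c$. $f$ is copositive if $f(x)\ge0$ for all $x\in\mathbb R^n_{>0}$. The critical system of $(\mathcal A_+,\mathcal A_-)$ is $F(c,x)=(f_c(x),x_1\partial_{x_1}f_c(x),\dots,x_n\partial_{x_n}f_c(x))$ for $c\in\mathbb R^{\mathcal A}_{>0}$, $x\in\mathbb R^n_{>0}$. For a nonempty face $\Gamma'$ of $\operatorname{conv}(\mathcal A)$, $\mathcal A^{\Gamma'}_\pm=\mathcal A_\pm\cap\Gamma'$, $\mathcal A^{\Gamma'}=\mathcal A\cap\Gamma'$, $\pi_{\Gamma'}:\mathbb R^{\mathcal A}\to\mathbb R^{\mathcal A^{\Gamma'}}$ is the coordinate projection, and $F^{\Gamma'}$ is the critical system of $(\mathcal A^{\Gamma'}_+,\mathcal A^{\Gamma'}_-)$ (i.e. of the truncation $f^{\Gamma'}$, obtained by keeping only the terms of $f$ with exponent in $\Gamma'$).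 A height function $h:\mathcal A\to\mathbb Z$ lifts $\mathcal A_-$ if $h(a)>0$ for $a\in\mathcal A_-$ and $h(a)=0$ for $a\in\mathcal A_+$; $c\star t^h$ denotes the vector $(c_at^{h(a)})_{a\in\mathcal A}$. *)

theory Defs
  imports "HOL-Analysis.Analysis"
begin

text \<open>Exponent vectors live in real^'n (with integer coordinates where required);
  the monomial x^a for x in the positive orthant.\<close>
definition monom :: "real^'n \<Rightarrow> real^'n \<Rightarrow> real" where
  "monom a x = (\<Prod>i\<in>UNIV. (x $ i) powr (a $ i))"

definition signomial :: "(real^'n) set \<Rightarrow> (real^'n) set \<Rightarrow> (real^'n \<Rightarrow> real) \<Rightarrow> real^'n \<Rightarrow> real" where
  "signomial Ap Am c x = (\<Sum>a\<in>Ap. c a * monom a x) - (\<Sum>b\<in>Am. c b * monom b x)"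

definition positive_orthant :: "(real^'n) set" where
  "positive_orthant = {x. \<forall>i. 0 < x $ i}"

definition partial :: "(real^'n \<Rightarrow> real) \<Rightarrow> 'n \<Rightarrow> real^'n \<Rightarrow> real" where
  "partial g i x = deriv (\<lambda>s. g (\<chi> j. if j = i then s else x $ j)) (x $ i)"

definition critical_zero :: "(real^'n) set \<Rightarrow> (real^'n) set \<Rightarrow> (real^'n \<Rightarrow> real) \<Rightarrow> real^'n \<Rightarrow> bool" where
  "critical_zero Ap Am c x \<longleftrightarrow>
     signomial Ap Am c x = 0 \<and> (\<forall>i. x $ i * partial (signomial Ap Am c) i x = 0)"

definition copositive :: "(real^'n) set \<Rightarrow> (real^'n) set \<Rightarrow> (real^'n \<Rightarrow> real) \<Rightarrow> bool" where
  "copositive Ap Am c \<longleftrightarrow> (\<forall>x\<in>positive_orthant. 0 \<le> signomial Ap Am c x)"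

definition lifts :: "(real^'n \<Rightarrow> int) \<Rightarrow> (real^'n) set \<Rightarrow> (real^'n) set \<Rightarrow> bool" where
  "lifts h Ap Am \<longleftrightarrow> (\<forall>a\<in>Am. 0 < h a) \<and> (\<forall>a\<in>Ap. h a = 0)"

definition star_pow :: "(real^'n \<Rightarrow> real) \<Rightarrow> real \<Rightarrow> (real^'n \<Rightarrow> int) \<Rightarrow> real^'n \<Rightarrow> real" where
  "star_pow c t h a = c a * t powr (of_int (h a))"

end

theory Submission
  imports Defs
begin


definition expv :: "real^'n \<Rightarrow> real^'n" where
  "expv u = (\<chi> i. exp (u $ i))"

definition lnv :: "real^'n \<Rightarrow> real^'n" where
  "lnv x = (\<chi> i. ln (x $ i))"

definition gs :: "(real^'n \<Rightarrow> real) \<Rightarrow> (real^'n) set \<Rightarrow> real^'n \<Rightarrow> real" where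
  "gs C P u = (\<Sum>a\<in>P. C a * exp (a \<bullet> u))"

definition ms :: "(real^'n) set \<Rightarrow> real^'n \<Rightarrow> real" where
  "ms P u = (\<Sum>a\<in>P. exp (a \<bullet> u))"

lemma monom_expv: "monom a (expv u) = exp (a \<bullet> u)"
proof -
  have "monom a (expv u) = (\<Prod>i\<in>UNIV. exp (a $ i * u $ i))"
    unfolding monom_def expv_def by (simp add: powr_def mult.commute)
  also have "\<dots> = exp (\<Sum>i\<in>UNIV. a $ i * u $ i)" by (simp add: exp_sum)
  also have "\<dots> = exp (a \<bullet> u)" by (simp add: inner_vec_def)
  finally show ?thesis .
qed

lemma expv_lnv: "x \<in> positive_orthant \<Longrightarrow> expv (lnv x) = x"
  unfolding expv_def lnv_def positive_orthant_def by (simp add: vec_eq_iff)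

lemma expv_pos: "expv u \<in> positive_orthant"
  unfolding expv_def positive_orthant_def by simp

lemma monom_lnv: "x \<in> positive_orthant \<Longrightarrow> monom a x = exp (a \<bullet> lnv x)"
  by (metis expv_lnv monom_expv)

lemma ms_pos: "finite P \<Longrightarrow> P \<noteq> {} \<Longrightarrow> 0 < ms P u"
  unfolding ms_def by (simp add: sum_pos)

lemma exp_seq_zero:
  assumes "d < 0"
  shows "(\<lambda>k. exp (real k * d)) \<longlonglongrightarrow> 0"
proof -
  have "(\<lambda>k. exp d ^ k) \<longlonglongrightarrow> 0"
    by (rule LIMSEQ_power_zero) (use assms in simp)
  then show ?thesis by (simp add: exp_of_nat_mult)
qed

lemma expose_neg:
  fixes A :: "(real^'n) set"
  assumes fin: "finite A" and G: "G face_of convex hull A" and neg: "gs C (A \<inter> G) u < 0"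
  shows "\<exists>u'. gs C A u' < 0"
proof -
  have "G exposed_face_of convex hull A"
    using exposed_face_of_polyhedron[OF polyhedron_convex_hull[OF fin]] G by blast
  then obtain w b where sub: "convex hull A \<subseteq> {x. w \<bullet> x \<le> b}"
      and Geq: "G = convex hull A \<inter> {x. w \<bullet> x = b}"
    unfolding exposed_face_of_def by blast
  have le: "w \<bullet> a \<le> b" if "a \<in> A" for a
    using sub hull_inc[OF that] by blast
  have inG: "a \<in> G \<longleftrightarrow> w \<bullet> a = b" if "a \<in> A" for a
    using Geq hull_inc[OF that] by blast
  define F where "F k = (\<Sum>a\<in>A. C a * exp (a \<bullet> u) * exp (real k * (w \<bullet> a - b)))" for k
  have lim: "F \<longlonglongrightarrow> (\<Sum>a\<in>A. C a * exp (a \<bullet> u) * (if a \<in> G then 1 else 0))"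
    unfolding F_def
  proof (intro tendsto_sum tendsto_mult tendsto_const)
    fix a assume a: "a \<in> A"
    show "(\<lambda>k. exp (real k * (w \<bullet> a - b))) \<longlonglongrightarrow> (if a \<in> G then 1 else 0)"
    proof (cases "a \<in> G")
      case True
      then show ?thesis using inG[OF a] by simp
    next
      case False
      then have "w \<bullet> a - b < 0" using inG[OF a] le[OF a] by simp
      then show ?thesis using False exp_seq_zero by simp
    qed
  qed
  have "(\<Sum>a\<in>A. C a * exp (a \<bullet> u) * (if a \<in> G then 1 else 0)) = gs C (A \<inter> G) u"
    unfolding gs_def by (simp add: sum.inter_restrict[OF fin, symmetric] if_distrib cong: if_cong)
  with lim neg have "eventually (\<lambda>k. F k < 0) sequentially"
    by (metis order_tendstoD(2))
  then obtain k where Fk: "F k < 0" by (meson eventually_sequentially order_refl)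
  have "gs C A (u + real k *\<^sub>R w) = exp (real k * b) * F k"
    unfolding gs_def F_def sum_distrib_left
  proof (rule sum.cong[OF refl])
    fix a
    have "exp (a \<bullet> (u + real k *\<^sub>R w)) = exp (real k * b) * (exp (a \<bullet> u) * exp (real k * (w \<bullet> a - b)))"
      by (simp add: inner_add_right inner_commute algebra_simps flip: exp_add)
    then show "C a * exp (a \<bullet> (u + real k *\<^sub>R w)) = exp (real k * b) * (C a * exp (a \<bullet> u) * exp (real k * (w \<bullet> a - b)))"
      by simp
  qed
  also have "\<dots> < 0" using Fk by (simp add: mult_pos_neg)
  finally show ?thesis by blast
qed



lemma gs_shift:
  assumes "a0 \<in> P" "\<And>a. a \<in> P \<Longrightarrow> a \<bullet> z = a0 \<bullet> z"
  shows "gs C P (y + z) = exp (a0 \<bullet> z) * gs C P y" "ms P (y + z) = exp (a0 \<bullet> z) * ms P y"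
proof -
  have e: "exp (a \<bullet> (y + z)) = exp (a0 \<bullet> z) * exp (a \<bullet> y)" if "a \<in> P" for a
  proof -
    have "a \<bullet> z = a0 \<bullet> z" by (rule assms(2)[OF that])
    then show ?thesis by (simp add: inner_add_right exp_add)
  qed
  show "gs C P (y + z) = exp (a0 \<bullet> z) * gs C P y"
    unfolding gs_def sum_distrib_left by (rule sum.cong) (simp_all add: e)
  show "ms P (y + z) = exp (a0 \<bullet> z) * ms P y"
    unfolding ms_def sum_distrib_left by (rule sum.cong) (simp_all add: e)
qed

lemma gs_cont:
  assumes "f \<longlonglongrightarrow> l"
  shows "(\<lambda>k. gs C P (f k)) \<longlonglongrightarrow> gs C P l" "(\<lambda>k. ms P (f k)) \<longlonglongrightarrow> ms P l"
  unfolding gs_def ms_def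
  by (intro tendsto_sum tendsto_mult tendsto_const tendsto_exp tendsto_inner assms)+

lemma unbounded_seq:
  fixes y :: "nat \<Rightarrow> 'a::real_normed_vector"
  assumes "\<not> bounded (range y)"
  shows "\<exists>j\<ge>k. real k \<le> norm (y j)"
proof (rule ccontr)
  assume "\<not> ?thesis"
  then have "\<forall>j\<ge>k. norm (y j) < real k" by force
  then have "bounded (y ` {k..})" unfolding bounded_iff by (auto intro!: exI[of _ "real k"] less_imp_le)
  moreover have "bounded (y ` {..<k})" by (simp add: finite_imp_bounded)
  moreover have "{..<k} \<union> {k..} = (UNIV::nat set)" by auto
  then have "range y = y ` {..<k} \<union> y ` {k..}" by (metis image_Un)
  ultimately show False using assms by (metis bounded_Un)
qed

lemma keyK:
  fixes A :: "(real^'n) set" and C :: "real^'n \<Rightarrow> real"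
  assumes fin: "finite A"
  shows "F face_of convex hull A \<Longrightarrow> A \<inter> F \<noteq> {} \<Longrightarrow>
    ((\<lambda>k. gs C (A \<inter> F) (u k) / ms (A \<inter> F) (u k)) \<longlonglongrightarrow> 0) \<Longrightarrow>
    \<exists>G. G face_of convex hull A \<and> G \<subseteq> F \<and> A \<inter> G \<noteq> {} \<and> (\<exists>w. gs C (A \<inter> G) w = 0)"
proof (induct "card (A \<inter> F)" arbitrary: F u rule: less_induct)
  case less
  define P where "P = A \<inter> F"
  have finP: "finite P" using fin P_def by simp
  have Pne: "P \<noteq> {}" using less(3) P_def by simp
  then obtain a0 where a0: "a0 \<in> P" by blast
  have R0: "(\<lambda>k. gs C P (u k) / ms P (u k)) \<longlonglongrightarrow> 0" using less(4) P_def by simp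
  define D where "D = {a - b | a b. a \<in> P \<and> b \<in> P}"
  have "\<exists>y. y \<in> span D \<and> (\<forall>w\<in>span D. orthogonal (u k - y) w)" for k
  proof -
    obtain y z where "y \<in> span D" "\<And>w. w \<in> span D \<Longrightarrow> orthogonal z w" "u k = y + z"
      using orthogonal_subspace_decomp_exists by blast
    then show ?thesis by (intro exI[of _ y]) auto
  qed
  then obtain y where y: "\<And>k. y k \<in> span D" "\<And>k w. w \<in> span D \<Longrightarrow> orthogonal (u k - y k) w"
    by metis
  have zeq: "a \<bullet> (u k - y k) = a0 \<bullet> (u k - y k)" if "a \<in> P" for a k
  proof -
    have "a - a0 \<in> span D" using that a0 unfolding D_def by (blast intro: span_base)
    then have "orthogonal (u k - y k) (a - a0)" using y(2) by blast
    then show ?thesis by (simp add: orthogonal_def inner_diff_right inner_commute)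
  qed
  have Ry: "gs C P (y k) / ms P (y k) = gs C P (u k) / ms P (u k)" for k
  proof -
    have "gs C P (y k + (u k - y k)) = exp (a0 \<bullet> (u k - y k)) * gs C P (y k)"
         "ms P (y k + (u k - y k)) = exp (a0 \<bullet> (u k - y k)) * ms P (y k)"
      using gs_shift[OF a0 zeq[of _ k]] by blast+
    then show ?thesis by simp
  qed
  with R0 have Ry0: "(\<lambda>k. gs C P (y k) / ms P (y k)) \<longlonglongrightarrow> 0" by simp
  show ?case
  proof (cases "bounded (range y)")
    case True
    then obtain l r where r: "strict_mono r" "(y \<circ> r) \<longlonglongrightarrow> l"
      using bounded_imp_convergent_subsequence by blast
    have "(\<lambda>k. gs C P ((y \<circ> r) k) / ms P ((y \<circ> r) k)) \<longlonglongrightarrow> gs C P l / ms P l"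
      by (intro tendsto_divide gs_cont r(2)) (use ms_pos[OF finP Pne, of l] in linarith)
    moreover have "(\<lambda>k. gs C P ((y \<circ> r) k) / ms P ((y \<circ> r) k)) \<longlonglongrightarrow> 0"
      using LIMSEQ_subseq_LIMSEQ[OF Ry0 r(1)] by (simp add: o_def)
    ultimately have "gs C P l / ms P l = 0" using LIMSEQ_unique by blast
    then have "gs C P l = 0" using ms_pos[OF finP Pne, of l] by simp
    then show ?thesis using less(2,3) P_def by blast
  next
    case False
    have ex: "\<forall>k. \<exists>j. j \<ge> k \<and> real k \<le> norm (y j)" using unbounded_seq[OF False] by blast
    obtain \<sigma> where \<sigma>0: "\<forall>k. \<sigma> k \<ge> k \<and> real k \<le> norm (y (\<sigma> k))" using choice[OF ex] by blast
    have \<sigma>: "\<And>k. \<sigma> k \<ge> k" "\<And>k. real k \<le> norm (y (\<sigma> k))" using \<sigma>0 by auto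
    define q where "q k = y (\<sigma> k)" for k
    have Rq: "(\<lambda>k. gs C P (q k) / ms P (q k)) \<longlonglongrightarrow> 0"
    proof -
      have "filterlim \<sigma> sequentially sequentially"
      proof (rule filterlim_at_top_mono[OF filterlim_ident])
        show "eventually (\<lambda>x. x \<le> \<sigma> x) sequentially" by (rule always_eventually) (use \<sigma>(1) in blast)
      qed
      from filterlim_compose[OF Ry0 this] show ?thesis unfolding q_def o_def .
    qed
    define nq where "nq k = q k /\<^sub>R norm (q k)" for k
    have "norm (nq k) \<le> 1" for k unfolding nq_def by (cases "q k = 0") auto
    then have "bounded (range nq)" unfolding bounded_iff by blast
    then obtain v r where r: "strict_mono r" "(nq \<circ> r) \<longlonglongrightarrow> v"
      using bounded_imp_convergent_subsequence by blast
    have qD: "q k \<in> span D" for k unfolding q_def using y(1) by blast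
    have vD: "v \<in> span D"
      by (rule closed_sequentially[OF closed_span _ r(2)]) (simp add: nq_def qD span_mul)
    have rge: "r k \<ge> k" for k using r(1) by (simp add: seq_suble)
    have nv: "norm v = 1"
    proof -
      have "(\<lambda>k. norm ((nq \<circ> r) k)) \<longlonglongrightarrow> norm v" by (rule tendsto_norm[OF r(2)])
      moreover have "eventually (\<lambda>k. norm ((nq \<circ> r) k) = 1) sequentially"
      proof (rule eventually_sequentiallyI[of 1])
        fix k :: nat assume "1 \<le> k"
        then have "1 \<le> norm (q (r k))" using \<sigma>(2)[of "r k"] rge[of k] unfolding q_def by simp
        then have "norm (q (r k)) \<noteq> 0" by linarith
        then show "norm ((nq \<circ> r) k) = 1" by (simp add: nq_def)
      qed
      then have "(\<lambda>k. norm ((nq \<circ> r) k)) \<longlonglongrightarrow> 1" by (rule tendsto_eventually)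
      ultimately show ?thesis using LIMSEQ_unique by blast
    qed
    have "\<exists>a\<in>P. \<exists>b\<in>P. v \<bullet> a \<noteq> v \<bullet> b"
    proof (rule ccontr)
      assume H: "\<not> ?thesis"
      have "orthogonal v d" if "d \<in> D" for d
      proof -
        obtain a b where ab: "a \<in> P" "b \<in> P" "d = a - b" using \<open>d \<in> D\<close> unfolding D_def by blast
        have "v \<bullet> a = v \<bullet> b" using H ab by blast
        then show ?thesis using ab unfolding orthogonal_def by (simp add: inner_diff_right)
      qed
      then have "orthogonal v v" by (rule orthogonal_to_span[OF vD])
      then show False using nv by (simp add: orthogonal_def)
    qed
    then obtain a1 b1 where ab1: "a1 \<in> P" "b1 \<in> P" "v \<bullet> a1 \<noteq> v \<bullet> b1" by blast
    define m where "m = Max ((\<lambda>a. v \<bullet> a) ` P)"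
    have leM: "v \<bullet> a \<le> m" if "a \<in> P" for a unfolding m_def using finP that by simp
    have "m \<in> (\<lambda>a. v \<bullet> a) ` P" unfolding m_def using finP Pne by (intro Max_in) auto
    then obtain b0 where b0: "b0 \<in> P" "v \<bullet> b0 = m" by blast
    define G where "G = F \<inter> {x. v \<bullet> x = m}"
    obtain S' where S': "S' \<subseteq> A" "F = convex hull S'"
      using face_of_convex_hull_subset[OF finite_imp_compact[OF fin] less(2)] by blast
    have "S' \<subseteq> P" using S' hull_subset[of S' convex] unfolding P_def by blast
    then have FP: "F \<subseteq> convex hull P" using S'(2) hull_mono by blast
    have "convex hull P \<subseteq> {x. v \<bullet> x \<le> m}"
      by (rule hull_minimal) (use leM convex_halfspace_le in auto)
    with FP have Fle: "\<And>x. x \<in> F \<Longrightarrow> v \<bullet> x \<le> m" by blast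
    have GF: "G face_of F" unfolding G_def
      by (rule face_of_Int_supporting_hyperplane_le[OF face_of_imp_convex[OF less(2)] Fle])
    have GA: "G face_of convex hull A" using face_of_trans[OF GF less(2)] .
    define Q where "Q = A \<inter> G"
    have Qeq: "Q = {a\<in>P. v \<bullet> a = m}" unfolding Q_def G_def P_def by auto
    have Qne: "Q \<noteq> {}" using b0 Qeq by auto
    have QP: "Q \<subseteq> P" using Qeq by auto
    have "v \<bullet> a1 < m \<or> v \<bullet> b1 < m" using leM[OF ab1(1)] leM[OF ab1(2)] ab1(3) by linarith
    then have "Q \<noteq> P" using Qeq ab1 by auto
    then have cardQ: "card (A \<inter> G) < card (A \<inter> F)"
      using psubset_card_mono[OF finP] QP unfolding Q_def P_def by blast
    define w where "w k = q (r k)" for k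
    have Rw: "(\<lambda>k. gs C P (w k) / ms P (w k)) \<longlonglongrightarrow> 0"
      using LIMSEQ_subseq_LIMSEQ[OF Rq r(1)] by (simp add: o_def w_def)
    have nw: "real k \<le> norm (w k)" for k
      using \<sigma>(2)[of "r k"] rge[of k] \<sigma>(1)[of "r k"] unfolding w_def q_def by linarith
    have nwt: "filterlim (\<lambda>k. norm (w k)) at_top sequentially"
      by (rule filterlim_at_top_mono[OF filterlim_real_sequentially]) (use nw in auto)
    have wv: "(\<lambda>k. w k /\<^sub>R norm (w k)) \<longlonglongrightarrow> v"
      using r(2) by (simp add: o_def nq_def w_def)
    have finQ: "finite Q" using finP QP finite_subset by blast
    define \<rho> where "\<rho> a k = exp (a \<bullet> w k) / ms Q (w k)" for a k
    have \<rho>0: "(\<rho> a) \<longlonglongrightarrow> 0" if a: "a \<in> P - Q" for a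
    proof -
      have am: "v \<bullet> a < m" using a Qeq leM by force
      have lin: "(\<lambda>k. (a - b0) \<bullet> (w k /\<^sub>R norm (w k))) \<longlonglongrightarrow> (a - b0) \<bullet> v"
        by (rule tendsto_inner[OF tendsto_const wv])
      have "(a - b0) \<bullet> v = v \<bullet> a - v \<bullet> b0" by (simp add: inner_diff_left inner_commute[of a v] inner_commute[of b0 v])
      then have neg: "(a - b0) \<bullet> v < 0" using am b0 by linarith
      have eq: "(\<lambda>k. (a - b0) \<bullet> (w k /\<^sub>R norm (w k)) * norm (w k)) = (\<lambda>k. (a - b0) \<bullet> w k)"
      proof (rule ext)
        fix k show "(a - b0) \<bullet> (w k /\<^sub>R norm (w k)) * norm (w k) = (a - b0) \<bullet> w k"
          by (cases "w k = 0") auto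
      qed
      have fl: "filterlim (\<lambda>k. (a - b0) \<bullet> w k) at_bot sequentially"
        using filterlim_tendsto_neg_mult_at_bot[OF lin neg nwt] unfolding eq .
      have e0: "(\<lambda>k. exp ((a - b0) \<bullet> w k)) \<longlonglongrightarrow> 0"
        using filterlim_compose[OF exp_at_bot fl] .
      show ?thesis
      proof (rule tendsto_sandwich[OF _ _ tendsto_const e0])
        show "eventually (\<lambda>k. 0 \<le> \<rho> a k) sequentially"
          using ms_pos[OF finQ Qne] by (simp add: \<rho>_def less_imp_le)
        show "eventually (\<lambda>k. \<rho> a k \<le> exp ((a - b0) \<bullet> w k)) sequentially"
        proof (rule always_eventually, rule allI)
          fix k
          have b0Q: "b0 \<in> Q" using b0 Qeq by auto
          have "exp (b0 \<bullet> w k) \<le> ms Q (w k)"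
            unfolding ms_def using member_le_sum[OF b0Q, of "\<lambda>a. exp (a \<bullet> w k)"] finQ by simp
          then have "exp (a \<bullet> w k) / ms Q (w k) \<le> exp (a \<bullet> w k) / exp (b0 \<bullet> w k)"
            using ms_pos[OF finQ Qne, of "w k"] by (intro divide_left_mono) (auto intro: mult_pos_pos)
          also have "\<dots> = exp ((a - b0) \<bullet> w k)" by (simp add: inner_diff_left exp_diff)
          finally show "\<rho> a k \<le> exp ((a - b0) \<bullet> w k)" by (simp add: \<rho>_def)
        qed
      qed
    qed
    have decomp: "gs C Q (w k) / ms Q (w k) =
        gs C P (w k) / ms P (w k) * (1 + (\<Sum>a\<in>P - Q. \<rho> a k)) - (\<Sum>a\<in>P - Q. C a * \<rho> a k)" for k
    proof -
      have msQ: "0 < ms Q (w k)" by (rule ms_pos[OF finQ Qne])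
      have msP: "0 < ms P (w k)" by (rule ms_pos[OF finP Pne])
      have g: "gs C P (w k) = gs C Q (w k) + (\<Sum>a\<in>P - Q. C a * exp (a \<bullet> w k))"
        unfolding gs_def using sum.subset_diff[OF QP finP] by (simp add: add.commute)
      have mm: "ms P (w k) = ms Q (w k) + (\<Sum>a\<in>P - Q. exp (a \<bullet> w k))"
        unfolding ms_def using sum.subset_diff[OF QP finP] by (simp add: add.commute)
      have nQ: "ms Q (w k) \<noteq> 0" and nP: "ms P (w k) \<noteq> 0" using msQ msP by auto
      have s1: "1 + (\<Sum>a\<in>P - Q. \<rho> a k) = ms P (w k) / ms Q (w k)"
      proof -
        have "(\<Sum>a\<in>P - Q. \<rho> a k) = (\<Sum>a\<in>P - Q. exp (a \<bullet> w k)) / ms Q (w k)"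
          by (simp add: \<rho>_def sum_divide_distrib)
        then show ?thesis using nQ by (simp add: mm add_divide_distrib)
      qed
      have s2: "(\<Sum>a\<in>P - Q. C a * \<rho> a k) = (\<Sum>a\<in>P - Q. C a * exp (a \<bullet> w k)) / ms Q (w k)"
        by (simp add: \<rho>_def sum_divide_distrib)
      have "gs C P (w k) / ms P (w k) * (1 + (\<Sum>a\<in>P - Q. \<rho> a k)) = gs C P (w k) / ms Q (w k)"
        unfolding s1 using nP by simp
      then show ?thesis unfolding s2 g by (simp add: diff_divide_distrib add_divide_distrib)
    qed
    have "(\<lambda>k. gs C P (w k) / ms P (w k) * (1 + (\<Sum>a\<in>P - Q. \<rho> a k)) - (\<Sum>a\<in>P - Q. C a * \<rho> a k))
        \<longlonglongrightarrow> 0 * (1 + (\<Sum>a\<in>P - Q. 0)) - (\<Sum>a\<in>P - Q. C a * 0)"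
      by (intro tendsto_intros Rw \<rho>0)
    moreover have "0 * (1 + (\<Sum>a\<in>P - Q. 0)) - (\<Sum>a\<in>P - Q. C a * 0) = (0::real)" by simp
    ultimately have "(\<lambda>k. gs C Q (w k) / ms Q (w k)) \<longlonglongrightarrow> 0"
      unfolding decomp by simp
    then have RQ: "(\<lambda>k. gs C (A \<inter> G) (w k) / ms (A \<inter> G) (w k)) \<longlonglongrightarrow> 0"
      unfolding Q_def .
    have AGne: "A \<inter> G \<noteq> {}" using Qne unfolding Q_def .
    obtain G' where
      "G' face_of convex hull A" "G' \<subseteq> G" "A \<inter> G' \<noteq> {}" "\<exists>w. gs C (A \<inter> G') w = 0"
      using less(1)[OF cardQ GA AGne RQ] by blast
    moreover have "G \<subseteq> F" unfolding G_def by blast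
    ultimately show ?thesis by blast
  qed
qed



definition sc :: "(real^'n) set \<Rightarrow> (real^'n \<Rightarrow> real) \<Rightarrow> real^'n \<Rightarrow> real" where
  "sc Am c' a = (if a \<in> Am then - c' a else c' a)"

lemma sig_gs:
  assumes "Ap \<inter> Am = {}" "finite Ap" "finite Am" "x \<in> positive_orthant"
  shows "signomial (Ap \<inter> G) (Am \<inter> G) c' x = gs (sc Am c') ((Ap \<union> Am) \<inter> G) (lnv x)"
proof -
  have u: "(Ap \<union> Am) \<inter> G = (Ap \<inter> G) \<union> (Am \<inter> G)" by blast
  have d: "(Ap \<inter> G) \<inter> (Am \<inter> G) = {}" using assms(1) by blast
  have "gs (sc Am c') ((Ap \<union> Am) \<inter> G) (lnv x) =
      (\<Sum>a\<in>Ap \<inter> G. sc Am c' a * exp (a \<bullet> lnv x)) + (\<Sum>a\<in>Am \<inter> G. sc Am c' a * exp (a \<bullet> lnv x))"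
    unfolding gs_def u by (rule sum.union_disjoint) (use assms d in auto)
  also have "(\<Sum>a\<in>Ap \<inter> G. sc Am c' a * exp (a \<bullet> lnv x)) = (\<Sum>a\<in>Ap \<inter> G. c' a * monom a x)"
    by (rule sum.cong) (use assms in \<open>auto simp: sc_def monom_lnv\<close>)
  also have "(\<Sum>a\<in>Am \<inter> G. sc Am c' a * exp (a \<bullet> lnv x)) = - (\<Sum>a\<in>Am \<inter> G. c' a * monom a x)"
    unfolding sum_negf[symmetric] by (rule sum.cong) (use assms in \<open>auto simp: sc_def monom_lnv\<close>)
  finally show ?thesis unfolding signomial_def by simp
qed

lemma amgm:
  fixes Ap :: "(real^'n) set"
  assumes "finite Ap" "b \<in> convex hull Ap"
  shows "exp (b \<bullet> u) \<le> ms Ap u"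
proof -
  obtain l where l: "\<forall>x\<in>Ap. 0 \<le> l x" "sum l Ap = 1" "(\<Sum>x\<in>Ap. l x *\<^sub>R x) = b"
    using assms convex_hull_finite[OF assms(1)] by auto
  have ne: "Ap \<noteq> {}" using l(2) by auto
  have "b \<bullet> u = (\<Sum>x\<in>Ap. l x *\<^sub>R (x \<bullet> u))"
    unfolding l(3)[symmetric] by (simp add: inner_sum_left)
  then have "exp (b \<bullet> u) = exp (\<Sum>x\<in>Ap. l x *\<^sub>R (x \<bullet> u))" by simp
  also have "\<dots> \<le> (\<Sum>x\<in>Ap. l x * exp (x \<bullet> u))"
    by (rule convex_on_sum[OF assms(1) ne exp_convex l(2)]) (use l in auto)
  also have "\<dots> \<le> (\<Sum>x\<in>Ap. exp (x \<bullet> u))"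
  proof (rule sum_mono)
    fix x assume x: "x \<in> Ap"
    have "l x \<le> 1" using l(2) member_le_sum[OF x, of l] l(1) assms(1) by auto
    then show "l x * exp (x \<bullet> u) \<le> exp (x \<bullet> u)" using l(1) x by (simp add: mult_le_cancel_right1)
  qed
  finally show ?thesis unfolding ms_def .
qed

lemma crit:
  fixes Ap Am :: "(real^'n) set"
  assumes x: "x \<in> positive_orthant" and z: "signomial Ap Am c' x = 0"
    and nn: "\<And>y. y \<in> positive_orthant \<Longrightarrow> 0 \<le> signomial Ap Am c' y"
  shows "partial (signomial Ap Am c') i x = 0"
proof -
  define v where "v s = (\<chi> j. if j = i then s else x $ j)" for s
  define K where "K a = (\<Prod>j\<in>UNIV - {i}. x $ j powr a $ j)" for a :: "real^'n"
  have mv: "monom a (v s) = s powr (a $ i) * K a" for a s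
  proof -
    have "monom a (v s) = (\<Prod>j\<in>UNIV. (if j = i then s else x $ j) powr a $ j)"
      unfolding monom_def v_def by simp
    also have "\<dots> = (if i = i then s else x $ i) powr a $ i * (\<Prod>j\<in>UNIV - {i}. (if j = i then s else x $ j) powr a $ j)"
      by (rule prod.remove) auto
    also have "(\<Prod>j\<in>UNIV - {i}. (if j = i then s else x $ j) powr a $ j) = K a"
      unfolding K_def by (rule prod.cong) auto
    finally show ?thesis by simp
  qed
  define \<phi> where "\<phi> s = signomial Ap Am c' (v s)" for s
  have \<phi>eq: "\<phi> = (\<lambda>s. (\<Sum>a\<in>Ap. c' a * K a * s powr (a $ i)) - (\<Sum>b\<in>Am. c' b * K b * s powr (b $ i)))"
    unfolding \<phi>_def signomial_def mv by (simp add: ac_simps)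
  have xi: "0 < x $ i" using x unfolding positive_orthant_def by simp
  have "\<exists>D. (\<phi> has_real_derivative D) (at (x $ i))"
    unfolding \<phi>eq
    apply (rule exI)
    apply (rule DERIV_diff)
     apply (rule DERIV_sum, rule DERIV_cmult, rule has_real_derivative_powr[OF xi])
    apply (rule DERIV_sum, rule DERIV_cmult, rule has_real_derivative_powr[OF xi])
    done
  then obtain D where D: "(\<phi> has_real_derivative D) (at (x $ i))" by blast
  have vx: "v (x $ i) = x" unfolding v_def by (simp add: vec_eq_iff)
  have "D = 0"
  proof (rule DERIV_local_min[OF D xi], intro allI impI)
    fix s assume "\<bar>x $ i - s\<bar> < x $ i"
    then have "0 < s" by linarith
    then have "v s \<in> positive_orthant" using x unfolding v_def positive_orthant_def by auto
    then show "\<phi> (x $ i) \<le> \<phi> s" unfolding \<phi>_def vx using z nn by simp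
  qed
  have "partial (signomial Ap Am c') i x = deriv \<phi> (x $ i)"
    unfolding partial_def \<phi>_def v_def ..
  also have "\<dots> = D" by (rule DERIV_imp_deriv[OF D])
  finally show ?thesis using \<open>D = 0\<close> by simp
qed



lemma lnv_expv: "lnv (expv u) = u"
  unfolding lnv_def expv_def by (simp add: vec_eq_iff)

theorem theorem2p7:
  fixes Ap Am :: "(real^'n) set" and c :: "real^'n \<Rightarrow> real"
    and h :: "real^'n \<Rightarrow> int" and \<Gamma> :: "(real^'n) set"
  assumes "finite Ap" and "finite Am" and "Ap \<inter> Am = {}"
    and "\<forall>a\<in>Ap \<union> Am. \<forall>i. a $ i \<in> \<int>"
    and "Am \<noteq> {}"
    and "{v. v extreme_point_of (convex hull (Ap \<union> Am))} \<subseteq> Ap"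
    and "\<Gamma> face_of convex hull (Ap \<union> Am)" and "Am \<subseteq> \<Gamma>"
    and "\<forall>\<Gamma>'. \<Gamma>' face_of convex hull (Ap \<union> Am) \<and> Am \<subseteq> \<Gamma>' \<longrightarrow> \<Gamma> \<subseteq> \<Gamma>'"
    and "\<forall>a\<in>Ap \<union> Am. 0 < c a"
    and "lifts h Ap Am"
  defines "J \<equiv> {\<Gamma>'. \<Gamma>' face_of \<Gamma> \<and> \<Gamma>' \<inter> Am \<noteq> {}}"
  defines "S \<equiv> (\<Union>\<Gamma>'\<in>J. {t::real. 0 < t \<and>
              (\<exists>x\<in>positive_orthant. critical_zero (Ap \<inter> \<Gamma>') (Am \<inter> \<Gamma>') (star_pow c t h) x)})"
  shows "\<exists>tstar. tstar \<in> S \<and> (\<forall>t\<in>S. tstar \<le> t) \<and> (copositive Ap Am c \<longleftrightarrow> 1 \<le> tstar)"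
proof -
  define A where "A = Ap \<union> Am"
  have finA: "finite A" using assms(1,2) A_def by simp
  have hpos: "\<And>a. a \<in> Am \<Longrightarrow> 0 < h a" and h0: "\<And>a. a \<in> Ap \<Longrightarrow> h a = 0"
    using assms(11) unfolding lifts_def by auto
  have cpos: "\<And>a. a \<in> A \<Longrightarrow> 0 < c a" using assms(10) A_def by auto
  define sg where "sg a = (if a \<in> Am then -1 else (1::real))" for a
  define Ct where "Ct t a = sg a * (c a * t powr real_of_int (h a))" for t a
  have scCt: "sc Am (star_pow c t h) = Ct t" for t
    by (rule ext) (simp add: sc_def Ct_def sg_def star_pow_def)
  have CtAp: "Ct t a = c a" if "a \<in> Ap" "0 < t" for t a
    using that h0[OF that(1)] assms(3) by (auto simp: Ct_def sg_def)
  have CtAm: "Ct t a = - (c a * t powr real_of_int (h a))" if "a \<in> Am" for t a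
    using that by (simp add: Ct_def sg_def)
  have sigG: "signomial (Ap \<inter> G) (Am \<inter> G) (star_pow c t h) x = gs (Ct t) (A \<inter> G) (lnv x)"
    if "x \<in> positive_orthant" for G t x
    using sig_gs[OF assms(3,1,2) that] scCt A_def by simp
  have sigA: "signomial Ap Am (star_pow c t h) x = gs (Ct t) A (lnv x)"
    if "x \<in> positive_orthant" for t x
    using sigG[OF that, of UNIV t] by simp
  have cop_iff: "copositive Ap Am (star_pow c t h) \<longleftrightarrow> (\<forall>u. 0 \<le> gs (Ct t) A u)" for t
  proof
    assume "copositive Ap Am (star_pow c t h)"
    then show "\<forall>u. 0 \<le> gs (Ct t) A u"
      unfolding copositive_def using sigA[OF expv_pos] lnv_expv expv_pos by metis
  next
    assume "\<forall>u. 0 \<le> gs (Ct t) A u"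
    then show "copositive Ap Am (star_pow c t h)"
      unfolding copositive_def using sigA by simp
  qed
  have ptmono: "Ct t' a \<le> Ct t a" if "a \<in> A" "0 < t" "t \<le> t'" for a t t'
  proof (cases "a \<in> Am")
    case True
    have "t powr real_of_int (h a) \<le> t' powr real_of_int (h a)"
      by (rule powr_mono2) (use hpos[OF True] that in auto)
    then show ?thesis using CtAm[OF True] cpos[OF that(1)] by (simp add: mult_left_mono)
  next
    case False
    then have "a \<in> Ap" using that A_def by auto
    then show ?thesis using CtAp that by simp
  qed
  have ptsmono: "Ct t' a < Ct t a" if "a \<in> Am" "0 < t" "t < t'" for a t t'
  proof -
    have "t powr real_of_int (h a) < t' powr real_of_int (h a)"
      by (rule powr_less_mono2) (use hpos[OF that(1)] that in auto)
    then show ?thesis using CtAm[OF that(1)] cpos[of a] that(1) A_def by simp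
  qed
  have mono: "gs (Ct t') P u \<le> gs (Ct t) P u" if "P \<subseteq> A" "0 < t" "t \<le> t'" for P t t' u
    unfolding gs_def by (rule sum_mono) (use ptmono that in auto)
  have smono: "gs (Ct t') P u < gs (Ct t) P u"
    if hP: "P \<subseteq> A" "P \<inter> Am \<noteq> {}" "0 < t" "t < t'" for P t t' u
    unfolding gs_def
  proof (rule sum_strict_mono_ex1)
    show "finite P" using hP finA finite_subset by blast
    show "\<forall>x\<in>P. Ct t' x * exp (x \<bullet> u) \<le> Ct t x * exp (x \<bullet> u)"
      using ptmono hP by auto
    obtain a where "a \<in> P" "a \<in> Am" using hP by blast
    then show "\<exists>a\<in>P. Ct t' a * exp (a \<bullet> u) < Ct t a * exp (a \<bullet> u)"
      using ptsmono[of a t t'] hP by auto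
  qed
  have Ctlim: "((\<lambda>x. Ct (f x) a) \<longlongrightarrow> Ct t a) F" if "(f \<longlongrightarrow> t) F" "0 < t" for f t a F
    unfolding Ct_def by (intro tendsto_mult tendsto_const tendsto_powr that) (use that in auto)
  have gslim: "((\<lambda>x. gs (Ct (f x)) P u) \<longlongrightarrow> gs (Ct t) P u) F" if "(f \<longlongrightarrow> t) F" "0 < t" for f t P u F
    unfolding gs_def by (intro tendsto_sum tendsto_mult tendsto_const Ctlim that)
  define T where "T = {t. 0 < t \<and> (\<forall>u. 0 \<le> gs (Ct t) A u)}"
  have down: "t \<in> T" if "t' \<in> T" "0 < t" "t \<le> t'" for t t'
    using that mono[of A t t'] unfolding T_def by (auto intro: order_trans)
  obtain b0 where b0: "b0 \<in> Am" using assms(5) by blast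
  define B where "B = max 1 (sum c Ap / c b0 + 1)"
  have bdd: "t \<le> B" if "t \<in> T" for t
  proof (rule ccontr)
    assume "\<not> t \<le> B"
    then have t1: "1 \<le> t" and tB: "sum c Ap / c b0 + 1 < t" unfolding B_def by auto
    have cb0: "0 < c b0" using cpos b0 A_def by auto
    have "gs (Ct t) A 0 = (\<Sum>a\<in>Ap. Ct t a) + (\<Sum>a\<in>Am. Ct t a)"
      unfolding gs_def A_def by (simp add: sum.union_disjoint assms(1,2,3))
    also have "(\<Sum>a\<in>Ap. Ct t a) = sum c Ap" using CtAp t1 by simp
    also have "(\<Sum>a\<in>Am. Ct t a) \<le> Ct t b0"
    proof -
      have "(\<Sum>a\<in>Am. Ct t a) = Ct t b0 + (\<Sum>a\<in>Am - {b0}. Ct t a)"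
        using sum.remove[OF assms(2) b0] .
      moreover have "(\<Sum>a\<in>Am - {b0}. Ct t a) \<le> 0"
      proof (rule sum_nonpos)
        fix x assume x: "x \<in> Am - {b0}"
        then have "0 < c x" using cpos A_def by auto
        then have "0 \<le> c x * t powr real_of_int (h x)" by simp
        then show "Ct t x \<le> 0" using CtAm x by simp
      qed
      ultimately show ?thesis by simp
    qed
    also have "Ct t b0 \<le> - (c b0 * t)"
    proof -
      have "t powr 1 \<le> t powr real_of_int (h b0)"
        by (rule powr_mono) (use hpos[OF b0] t1 in auto)
      then show ?thesis using CtAm[OF b0] cb0 t1 by simp
    qed
    finally have "gs (Ct t) A 0 \<le> sum c Ap - c b0 * t" by simp
    also have "\<dots> < 0" using tB cb0 by (simp add: field_simps)
    finally have neg: "gs (Ct t) A 0 < 0" .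
    have "0 \<le> gs (Ct t) A 0" using that unfolding T_def by blast
    with neg show False by linarith
  qed
  have bddT: "bdd_above T" using bdd by (auto simp: bdd_above_def)
  have \<Gamma>A: "\<Gamma> face_of convex hull A" using assms(7) A_def by simp
  have bconv: "b \<in> convex hull Ap" if "b \<in> Am" for b
  proof -
    have "convex hull A = convex hull {v. v extreme_point_of (convex hull A)}"
      by (rule Krein_Milman_Minkowski[OF finite_imp_compact_convex_hull[OF finA] convex_convex_hull])
    also have "\<dots> \<subseteq> convex hull Ap" using assms(6) A_def by (simp add: hull_mono)
    finally show ?thesis using hull_inc[of b A] that A_def by blast
  qed
  have finAp: "finite Ap" by (rule assms(1))
  have neT: "T \<noteq> {}"
  proof -
    have Apne: "Ap \<noteq> {}" using bconv[OF b0] by auto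
    define cm where "cm = Min (c ` Ap)"
    have cmpos: "0 < cm" unfolding cm_def using Min_in[of "c ` Ap"] finAp Apne cpos A_def by auto
    have cmle: "cm \<le> c a" if "a \<in> Ap" for a unfolding cm_def using finAp that by simp
    define sC where "sC = sum c Am"
    have sC0: "0 \<le> sC" unfolding sC_def by (rule sum_nonneg) (use cpos A_def in \<open>auto intro: less_imp_le\<close>)
    define t1 where "t1 = min 1 (cm / (sC + 1))"
    have t1pos: "0 < t1" unfolding t1_def using cmpos sC0 by simp
    have t1le: "t1 \<le> 1" unfolding t1_def by simp
    have t1sC: "t1 * sC \<le> cm"
    proof -
      have "t1 \<le> cm / (sC + 1)" unfolding t1_def by simp
      then have "t1 * (sC + 1) \<le> cm" using sC0 by (simp add: field_simps)
      then show ?thesis using t1pos by (simp add: algebra_simps)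
    qed
    have "t1 \<in> T" unfolding T_def
    proof (intro CollectI conjI allI t1pos)
      fix u
      define V where "V = ms Ap u"
      have "gs (Ct t1) A u = (\<Sum>a\<in>Ap. Ct t1 a * exp (a \<bullet> u)) + (\<Sum>a\<in>Am. Ct t1 a * exp (a \<bullet> u))"
        unfolding gs_def A_def by (simp add: sum.union_disjoint assms(1,2,3))
      moreover have "cm * V \<le> (\<Sum>a\<in>Ap. Ct t1 a * exp (a \<bullet> u))"
      proof -
        have "cm * V = (\<Sum>a\<in>Ap. cm * exp (a \<bullet> u))" unfolding V_def ms_def by (simp add: sum_distrib_left)
        also have "\<dots> \<le> (\<Sum>a\<in>Ap. Ct t1 a * exp (a \<bullet> u))"
          by (rule sum_mono) (use cmle CtAp t1pos in \<open>auto intro: mult_right_mono\<close>)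
        finally show ?thesis .
      qed
      moreover have "- (t1 * sC * V) \<le> (\<Sum>a\<in>Am. Ct t1 a * exp (a \<bullet> u))"
      proof -
        have "(\<Sum>a\<in>Am. c a * t1 powr real_of_int (h a) * exp (a \<bullet> u)) \<le> (\<Sum>a\<in>Am. c a * t1 * V)"
        proof (rule sum_mono)
          fix a assume a: "a \<in> Am"
          have ca: "0 < c a" using cpos a A_def by auto
          have "t1 powr real_of_int (h a) \<le> t1 powr 1"
            by (rule powr_mono') (use hpos[OF a] t1pos t1le in auto)
          then have p: "t1 powr real_of_int (h a) \<le> t1" using t1pos by simp
          have e: "exp (a \<bullet> u) \<le> V" unfolding V_def by (rule amgm[OF finAp bconv[OF a]])
          have "c a * t1 powr real_of_int (h a) * exp (a \<bullet> u) \<le> c a * t1 * exp (a \<bullet> u)"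
            using p ca by (intro mult_right_mono mult_left_mono) auto
          also have "\<dots> \<le> c a * t1 * V" using e ca t1pos by (intro mult_left_mono) auto
          finally show "c a * t1 powr real_of_int (h a) * exp (a \<bullet> u) \<le> c a * t1 * V" .
        qed
        also have "(\<Sum>a\<in>Am. c a * t1 * V) = t1 * sC * V" unfolding sC_def
          by (simp add: sum_distrib_right sum_distrib_left algebra_simps)
        finally have "(\<Sum>a\<in>Am. c a * t1 powr real_of_int (h a) * exp (a \<bullet> u)) \<le> t1 * sC * V" .
        moreover have "(\<Sum>a\<in>Am. Ct t1 a * exp (a \<bullet> u)) = - (\<Sum>a\<in>Am. c a * t1 powr real_of_int (h a) * exp (a \<bullet> u))"
          unfolding sum_negf[symmetric] by (rule sum.cong) (simp_all add: CtAm)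
        ultimately show ?thesis by linarith
      qed
      moreover have "0 \<le> V" unfolding V_def ms_def by (simp add: sum_nonneg)
      then have "t1 * sC * V \<le> cm * V" using t1sC by (simp add: mult_right_mono)
      ultimately show "0 \<le> gs (Ct t1) A u" by linarith
    qed
    then show ?thesis by blast
  qed
  define t0 where "t0 = Sup T"
  have t0pos: "0 < t0"
  proof -
    obtain t where "t \<in> T" using neT by blast
    then have "0 < t" "t \<le> t0" unfolding t0_def using cSup_upper[OF _ bddT] T_def by auto
    then show ?thesis by linarith
  qed
  have t0T: "t0 \<in> T"
    unfolding T_def
  proof (intro CollectI conjI allI t0pos)
    fix u
    show "0 \<le> gs (Ct t0) A u"
    proof (rule ccontr)
      assume "\<not> 0 \<le> gs (Ct t0) A u"
      then have neg: "gs (Ct t0) A u < 0" by simp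
      have lim: "((\<lambda>t. gs (Ct t) A u) \<longlongrightarrow> gs (Ct t0) A u) (at t0)"
        by (rule gslim[OF tendsto_ident_at t0pos])
      have "eventually (\<lambda>t. gs (Ct t) A u < 0) (at t0)"
        using order_tendstoD(2)[OF lim neg] .
      then obtain d where d: "0 < d" "\<And>t. t \<noteq> t0 \<Longrightarrow> dist t t0 < d \<Longrightarrow> gs (Ct t) A u < 0"
        unfolding eventually_at by blast
      have "t0 - d < Sup T" using d(1) t0_def by simp
      then obtain t' where t': "t' \<in> T" "t0 - d < t'" using less_cSup_iff[OF neT bddT] by blast
      have "t' \<le> t0" unfolding t0_def using cSup_upper[OF t'(1) bddT] .
      show False
      proof (cases "t' = t0")
        case True
        have "0 \<le> gs (Ct t') A u" using t'(1) unfolding T_def by blast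
        then show False using True neg by simp
      next
        case False
        then have "gs (Ct t') A u < 0" using d(2)[of t'] t'(2) \<open>t' \<le> t0\<close> by (simp add: dist_real_def)
        moreover have "0 \<le> gs (Ct t') A u" using t'(1) unfolding T_def by blast
        ultimately show False by simp
      qed
    qed
  qed
  have nn0: "0 \<le> gs (Ct t0) A u" for u using t0T unfolding T_def by blast
  have nnface: "0 \<le> gs (Ct t0) (A \<inter> G) u" if "G face_of convex hull A" for G u
  proof (rule ccontr)
    assume "\<not> ?thesis"
    then have "gs (Ct t0) (A \<inter> G) u < 0" by simp
    from expose_neg[OF finA that this] obtain u' where "gs (Ct t0) A u' < 0" by blast
    with nn0[of u'] show False by simp
  qed
  have Sge: "t0 \<le> t" if "t \<in> S" for t
  proof -
    from that obtain \<Gamma>' x where G': "\<Gamma>' face_of \<Gamma>" "\<Gamma>' \<inter> Am \<noteq> {}" "0 < t" "x \<in> positive_orthant"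
        "critical_zero (Ap \<inter> \<Gamma>') (Am \<inter> \<Gamma>') (star_pow c t h) x"
      unfolding S_def J_def by blast
    show "t0 \<le> t"
    proof (rule ccontr)
      assume "\<not> t0 \<le> t"
      then have tt0: "t < t0" by simp
      have z: "gs (Ct t) (A \<inter> \<Gamma>') (lnv x) = 0"
        using G'(5) sigG[OF G'(4)] unfolding critical_zero_def by simp
      have "gs (Ct t0) (A \<inter> \<Gamma>') (lnv x) < gs (Ct t) (A \<inter> \<Gamma>') (lnv x)"
        by (rule smono) (use G'(2,3) tt0 A_def in auto)
      with z have neg: "gs (Ct t0) (A \<inter> \<Gamma>') (lnv x) < 0" by simp
      have "\<Gamma>' face_of convex hull A" using face_of_trans[OF G'(1) \<Gamma>A] .
      from nnface[OF this, of "lnv x"] neg show False by simp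
    qed
  qed
  have t0S: "t0 \<in> S"
  proof -
    define tk where "tk k = t0 + inverse (real (Suc k))" for k
    have tkgt: "t0 < tk k" for k unfolding tk_def by simp
    have tklim: "tk \<longlonglongrightarrow> t0"
      using tendsto_add[OF tendsto_const LIMSEQ_inverse_real_of_nat, of t0] unfolding tk_def by simp
    have "\<exists>u. gs (Ct (tk k)) A u < 0" for k
    proof (rule ccontr)
      assume "\<not> ?thesis"
      then have "tk k \<in> T" unfolding T_def using tkgt[of k] t0pos by (auto simp: not_less)
      then have "tk k \<le> t0" unfolding t0_def using cSup_upper[OF _ bddT] by blast
      then show False using tkgt[of k] by simp
    qed
    then obtain U where U: "\<And>k. gs (Ct (tk k)) A (U k) < 0" by metis
    define eps where "eps k = (\<Sum>a\<in>A. Ct t0 a - Ct (tk k) a)" for k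
    have "eps \<longlonglongrightarrow> (\<Sum>a\<in>A. Ct t0 a - Ct t0 a)"
      unfolding eps_def by (intro tendsto_sum tendsto_diff tendsto_const Ctlim[OF tklim t0pos])
    then have epslim: "eps \<longlonglongrightarrow> 0" by simp
    have Ane: "A \<noteq> {}" using b0 A_def by auto
    have Rle: "gs (Ct t0) A (U k) / ms A (U k) \<le> eps k" for k
    proof -
      have msp: "0 < ms A (U k)" by (rule ms_pos[OF finA Ane])
      have "gs (Ct t0) A (U k) \<le> gs (Ct t0) A (U k) - gs (Ct (tk k)) A (U k)" using U[of k] by simp
      also have "\<dots> = (\<Sum>a\<in>A. (Ct t0 a - Ct (tk k) a) * exp (a \<bullet> U k))"
        unfolding gs_def by (simp add: sum_subtractf[symmetric] algebra_simps)
      also have "\<dots> \<le> (\<Sum>a\<in>A. (Ct t0 a - Ct (tk k) a) * ms A (U k))"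
      proof (rule sum_mono)
        fix a assume a: "a \<in> A"
        have "0 \<le> Ct t0 a - Ct (tk k) a" using ptmono[OF a t0pos, of "tk k"] tkgt[of k] by simp
        moreover have "exp (a \<bullet> U k) \<le> ms A (U k)"
          unfolding ms_def using member_le_sum[OF a, of "\<lambda>a. exp (a \<bullet> U k)"] finA by simp
        ultimately show "(Ct t0 a - Ct (tk k) a) * exp (a \<bullet> U k) \<le> (Ct t0 a - Ct (tk k) a) * ms A (U k)"
          by (simp add: mult_left_mono)
      qed
      also have "\<dots> = eps k * ms A (U k)" unfolding eps_def by (simp add: sum_distrib_right)
      finally show ?thesis using msp by (simp add: pos_divide_le_eq)
    qed
    have Rge: "0 \<le> gs (Ct t0) A (U k) / ms A (U k)" for k
      using nn0[of "U k"] ms_pos[OF finA Ane, of "U k"] by simp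
    have Rlim: "(\<lambda>k. gs (Ct t0) A (U k) / ms A (U k)) \<longlonglongrightarrow> 0"
      by (rule tendsto_sandwich[OF _ _ tendsto_const epslim]) (use Rge Rle in auto)
    have AcA: "A \<inter> convex hull A = A" using hull_subset[of A convex] by blast
    have "convex hull A face_of convex hull A" by (rule face_of_refl[OF convex_convex_hull])
    from keyK[OF finA this, of "Ct t0" U] Rlim Ane AcA
    obtain G w where G: "G face_of convex hull A" "A \<inter> G \<noteq> {}" "gs (Ct t0) (A \<inter> G) w = 0"
      by auto
    define \<Gamma>' where "\<Gamma>' = G \<inter> \<Gamma>"
    have G'A: "\<Gamma>' face_of convex hull A" unfolding \<Gamma>'_def by (rule face_of_Int[OF G(1) \<Gamma>A])
    have G'G: "\<Gamma>' face_of \<Gamma>"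
      by (rule face_of_subset[OF G'A]) (use face_of_imp_subset[OF \<Gamma>A] \<Gamma>'_def in auto)
    have posAp: "0 < Ct t0 a * exp (a \<bullet> u)" if "a \<in> A" "a \<notin> Am" for a u
    proof -
      have "a \<in> Ap" using that A_def by auto
      then show ?thesis using CtAp[OF _ t0pos] cpos that(1) by simp
    qed
    have AG: "A \<inter> G \<subseteq> \<Gamma>"
    proof (rule ccontr)
      assume "\<not> ?thesis"
      then obtain a1 where a1: "a1 \<in> A \<inter> G" "a1 \<notin> \<Gamma>" by blast
      have eqs: "A \<inter> G = (A \<inter> \<Gamma>') \<union> (A \<inter> G - \<Gamma>)" unfolding \<Gamma>'_def by blast
      have "gs (Ct t0) (A \<inter> G) w = gs (Ct t0) (A \<inter> \<Gamma>') w + (\<Sum>a\<in>A \<inter> G - \<Gamma>. Ct t0 a * exp (a \<bullet> w))"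
        unfolding gs_def by (subst eqs, rule sum.union_disjoint) (use finA \<Gamma>'_def in auto)
      moreover have "0 < (\<Sum>a\<in>A \<inter> G - \<Gamma>. Ct t0 a * exp (a \<bullet> w))"
      proof (rule sum_pos2[of _ a1])
        show "finite (A \<inter> G - \<Gamma>)" using finA by simp
        show "a1 \<in> A \<inter> G - \<Gamma>" using a1 by blast
        show "0 < Ct t0 a1 * exp (a1 \<bullet> w)" using posAp[of a1 w] a1 assms(8) by blast
        fix a assume "a \<in> A \<inter> G - \<Gamma>"
        then show "0 \<le> Ct t0 a * exp (a \<bullet> w)" using posAp[of a w] assms(8) by force
      qed
      moreover have "0 \<le> gs (Ct t0) (A \<inter> \<Gamma>') w" by (rule nnface[OF G'A])
      ultimately show False using G(3) by linarith
    qed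
    have eqAG: "A \<inter> \<Gamma>' = A \<inter> G" using AG unfolding \<Gamma>'_def by blast
    have z: "gs (Ct t0) (A \<inter> \<Gamma>') w = 0" using G(3) eqAG by simp
    have amne: "\<Gamma>' \<inter> Am \<noteq> {}"
    proof
      assume e: "\<Gamma>' \<inter> Am = {}"
      have "0 < gs (Ct t0) (A \<inter> \<Gamma>') w" unfolding gs_def
        by (rule sum_pos) (use finA G(2) eqAG e posAp in auto)
      with z show False by simp
    qed
    define x where "x = expv w"
    have xo: "x \<in> positive_orthant" unfolding x_def by (rule expv_pos)
    have cz: "critical_zero (Ap \<inter> \<Gamma>') (Am \<inter> \<Gamma>') (star_pow c t0 h) x"
    proof -
      have sz: "signomial (Ap \<inter> \<Gamma>') (Am \<inter> \<Gamma>') (star_pow c t0 h) x = 0"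
        using sigG[OF xo] z unfolding x_def lnv_expv by simp
      have nn: "0 \<le> signomial (Ap \<inter> \<Gamma>') (Am \<inter> \<Gamma>') (star_pow c t0 h) y" if "y \<in> positive_orthant" for y
        using sigG[OF that] nnface[OF G'A] by simp
      show ?thesis unfolding critical_zero_def using sz crit[OF xo sz nn] by simp
    qed
    have "\<Gamma>' \<in> J" unfolding J_def using G'G amne by blast
    then show ?thesis unfolding S_def using t0pos xo cz by blast
  qed
  have sc1: "star_pow c 1 h = c" by (rule ext) (simp add: star_pow_def)
  have cop: "copositive Ap Am c \<longleftrightarrow> 1 \<le> t0"
  proof
    assume "copositive Ap Am c"
    then have "1 \<in> T" using cop_iff[of 1] sc1 unfolding T_def by simp
    then show "1 \<le> t0" unfolding t0_def using cSup_upper[OF _ bddT] by blast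
  next
    assume "1 \<le> t0"
    then have "1 \<in> T" using down[OF t0T] by simp
    then show "copositive Ap Am c" using cop_iff[of 1] sc1 unfolding T_def by simp
  qed
  show ?thesis using t0S Sge cop by blast
qed

end
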